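(* For every $n\geq 2$, let $D_n^2$ be the random variable that chooses independently a pair of trees $T,T'\in\mathcal{T}_n$ and computes $d_{\varphi,2}(T,T')^2$. Under the uniform model its expected value is $$E_U(D_n^2)=\frac{1}{3}(4n^3+18n^2-10n)-\frac{n(n+3)}{2}\cdot\frac{(2n-2)!!}{(2n-3)!!}-\frac{n(n+7)}{4}\left(\frac{(2n-2)!!}{(2n-3)!!}\right)^2.$$
   Context: A phylogenetic tree with $n$ leaves is a fully resolved (binary) rooted tree, viewed as a directed graph with arcs pointing away from the root, whose leaves are bijectively labeled by $\{1,\dots,n\}$; $\mathcal{T}_n$ denotes the set of all such trees (up to label-preserving isomorphism); $|\mathcal{T}_n|=(2n-3)!!$. The depth $\delta_T(v)$ of a node is the number of arcs from the root to it. For leaves $i\neq j$, $\varphi_T(i,j)$ is the depth of the lowest common ancestor of $i$ and $j$, and $\varphi_T(i,i)=\delta_T(i)$. The euclidean cophenetic metric is $d_{\varphi,2}(T_1,T_2)=\sqrt{\sum_{1\le i\le j\le n}(\varphi_{T_1}(i,j)-\varphi_{T_2}(i,j))^2}$. The uniform model gives each $T\in\mathcal{T}_n$ probability $1/(2n-3)!!$, and the two trees are chosen independently. Here $(2m-1)!!=(2m-1)(2m-3)\cdots 3\cdot 1$ and $(2m)!!=(2m)(2m-2)\cdots 2$, with $0!!=1$. *)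

theory Defs
  imports Complex_Main
begin

text \<open>Rooted binary trees with labelled leaves (ordered representation;
  phylogenetic trees are the classes modulo swapping children).\<close>
datatype ptree = Leaf nat | Node ptree ptree

fun leaves :: "ptree \<Rightarrow> nat list" where
  "leaves (Leaf i) = [i]"
| "leaves (Node a b) = leaves a @ leaves b"

definition valid_tree :: "nat \<Rightarrow> ptree \<Rightarrow> bool" where
  "valid_tree n t \<longleftrightarrow> distinct (leaves t) \<and> set (leaves t) = {1..n}"

inductive tree_iso :: "ptree \<Rightarrow> ptree \<Rightarrow> bool" where
  iso_leaf: "tree_iso (Leaf i) (Leaf i)"
| iso_same: "tree_iso a a' \<Longrightarrow> tree_iso b b' \<Longrightarrow> tree_iso (Node a b) (Node a' b')"
| iso_swap: "tree_iso a b' \<Longrightarrow> tree_iso b a' \<Longrightarrow> tree_iso (Node a b) (Node a' b')"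

definition phylo_trees :: "nat \<Rightarrow> ptree set set" where
  "phylo_trees n = {t. valid_tree n t} // {(s, t). tree_iso s t}"

fun leaf_depth :: "ptree \<Rightarrow> nat \<Rightarrow> nat" where
  "leaf_depth (Leaf j) i = 0"
| "leaf_depth (Node a b) i =
     1 + (if i \<in> set (leaves a) then leaf_depth a i else leaf_depth b i)"

fun lca_depth :: "ptree \<Rightarrow> nat \<Rightarrow> nat \<Rightarrow> nat" where
  "lca_depth (Leaf k) i j = 0"
| "lca_depth (Node a b) i j =
     (if i \<in> set (leaves a) \<and> j \<in> set (leaves a) then 1 + lca_depth a i j
      else if i \<in> set (leaves b) \<and> j \<in> set (leaves b) then 1 + lca_depth b i j
      else 0)"

definition cophenetic :: "ptree \<Rightarrow> nat \<Rightarrow> nat \<Rightarrow> nat" where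
  "cophenetic t i j = (if i = j then leaf_depth t i else lca_depth t i j)"

definition coph_dist_sq :: "nat \<Rightarrow> ptree \<Rightarrow> ptree \<Rightarrow> real" where
  "coph_dist_sq n t1 t2 =
     (\<Sum>i=1..n. \<Sum>j=i..n. (real (cophenetic t1 i j) - real (cophenetic t2 i j))^2)"

definition rep :: "ptree set \<Rightarrow> ptree" where
  "rep C = (SOME t. t \<in> C)"

definition expected_D2_uniform :: "nat \<Rightarrow> real" where
  "expected_D2_uniform n =
     (\<Sum>C\<in>phylo_trees n. \<Sum>D\<in>phylo_trees n. coph_dist_sq n (rep C) (rep D))
       / (real (card (phylo_trees n)))^2"

fun dfact :: "nat \<Rightarrow> nat" where
  "dfact 0 = 1"
| "dfact (Suc 0) = 1"
| "dfact (Suc (Suc m)) = Suc (Suc m) * dfact m"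

end

theory Submission
  imports Defs
begin


fun inserts :: "nat \<Rightarrow> ptree \<Rightarrow> ptree list" where
  "inserts x (Leaf i) = [Node (Leaf i) (Leaf x), Node (Leaf x) (Leaf i)]"
| "inserts x (Node a b) = [Node (Node a b) (Leaf x), Node (Leaf x) (Node a b)]
     @ map (\<lambda>a'. Node a' b) (inserts x a) @ map (\<lambda>b'. Node a b') (inserts x b)"

fun nnodes :: "ptree \<Rightarrow> nat" where
  "nnodes (Leaf _) = 1"
| "nnodes (Node a b) = Suc (nnodes a + nnodes b)"

fun remove :: "nat \<Rightarrow> ptree \<Rightarrow> ptree" where
  "remove x (Leaf i) = Leaf i"
| "remove x (Node a b) = (if a = Leaf x then b else if b = Leaf x then a
     else if x \<in> set (leaves a) then Node (remove x a) b else Node a (remove x b))"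

lemma leaves_ne: "leaves t \<noteq> []" by (induct t) auto

lemma nnodes_leaves: "nnodes t + 1 = 2 * length (leaves t)" by (induct t) auto

lemma length_inserts: "length (inserts x t) = 2 * nnodes t" by (induct t) auto

lemma inserts_node: "u \<in> set (inserts x t) \<Longrightarrow> \<exists>p q. u = Node p q"
  by (induct t) auto

lemma inserts_head: "Node t (Leaf x) \<in> set (inserts x t) \<and> Node (Leaf x) t \<in> set (inserts x t)"
  by (cases t) auto

lemma leaves_inserts: "u \<in> set (inserts x t) \<Longrightarrow> set (leaves u) = insert x (set (leaves t))"
  by (induct t arbitrary: u) auto

lemma distinct_leaves_inserts: "u \<in> set (inserts x t) \<Longrightarrow> distinct (leaves t) \<Longrightarrow> x \<notin> set (leaves t)
   \<Longrightarrow> distinct (leaves u)"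
proof (induct t arbitrary: u)
  case (Leaf i) then show ?case by auto
next
  case (Node a b)
  from Node.prems(1) consider "u = Node (Node a b) (Leaf x)" | "u = Node (Leaf x) (Node a b)"
    | a' where "a' \<in> set (inserts x a)" "u = Node a' b"
    | b' where "b' \<in> set (inserts x b)" "u = Node a b'" by auto
  then show ?case
  proof cases
    case 3 then show ?thesis using Node leaves_inserts[OF 3(1)] by auto
  next
    case 4 then show ?thesis using Node leaves_inserts[OF 4(1)] by auto
  qed (use Node in auto)
qed

lemma remove_inserts: "x \<notin> set (leaves t) \<Longrightarrow> u \<in> set (inserts x t) \<Longrightarrow> remove x u = t"
proof (induct t arbitrary: u)
  case (Leaf i) then show ?case by auto
next
  case (Node a b)
  from Node.prems(2) consider "u = Node (Node a b) (Leaf x)" | "u = Node (Leaf x) (Node a b)"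
    | a' where "a' \<in> set (inserts x a)" "u = Node a' b"
    | b' where "b' \<in> set (inserts x b)" "u = Node a b'" by auto
  then show ?case
  proof cases
    case 3 then show ?thesis using Node leaves_inserts[OF 3(1)] inserts_node[OF 3(1)] by auto
  next
    case 4 then show ?thesis using Node leaves_inserts[OF 4(1)] inserts_node[OF 4(1)] by auto
  qed (use Node in auto)
qed

lemma distinct_inserts: "x \<notin> set (leaves t) \<Longrightarrow> distinct (inserts x t)"
proof (induct t)
  case (Leaf i) then show ?case by auto
next
  case (Node a b)
  have A: "a' \<in> set (inserts x a) \<Longrightarrow> x \<in> set (leaves a') \<and> (\<exists>p q. a' = Node p q)" for a'
    using leaves_inserts inserts_node by blast
  have B: "b' \<in> set (inserts x b) \<Longrightarrow> x \<in> set (leaves b') \<and> (\<exists>p q. b' = Node p q)" for b'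
    using leaves_inserts inserts_node by blast
  show ?case using Node A B
    by (auto simp: distinct_map inj_on_def)
qed

lemma remove_props: "distinct (leaves u) \<Longrightarrow> x \<in> set (leaves u) \<Longrightarrow> u \<noteq> Leaf x \<Longrightarrow>
  u \<in> set (inserts x (remove x u)) \<and> set (leaves (remove x u)) = set (leaves u) - {x}
  \<and> distinct (leaves (remove x u))"
proof (induct u)
  case (Leaf i) then show ?case by auto
next
  case (Node a b)
  show ?case
  proof (cases "a = Leaf x")
    case True then show ?thesis using Node.prems inserts_head[of b x] by auto
  next
    case F1: False
    show ?thesis
    proof (cases "b = Leaf x")
      case True then show ?thesis using Node.prems inserts_head[of a x] F1 by auto
    next
      case F2: False
      show ?thesis
      proof (cases "x \<in> set (leaves a)")
        case True
        with Node F1 F2 show ?thesis by auto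
      next
        case False
        with Node F1 F2 show ?thesis by auto
      qed
    qed
  qed
qed




definition VT :: "nat set \<Rightarrow> ptree set" where
  "VT L = {t. distinct (leaves t) \<and> set (leaves t) = L}"

lemma VT_empty: "VT {} = {}"
  using leaves_ne by (auto simp: VT_def)

lemma VT_single: "VT {x} = {Leaf x}"
proof -
  have "t = Leaf x" if "distinct (leaves t)" "set (leaves t) = {x}" for t
  proof (cases t)
    case (Leaf i) then show ?thesis using that by auto
  next
    case (Node a b)
    obtain p where "p \<in> set (leaves a)" using leaves_ne[of a] by (cases "leaves a") auto
    moreover obtain q where "q \<in> set (leaves b)" using leaves_ne[of b] by (cases "leaves b") auto
    ultimately have "p = x" "q = x" using that Node by auto
    then show ?thesis using that Node \<open>p \<in> set (leaves a)\<close> \<open>q \<in> set (leaves b)\<close> by auto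
  qed
  then show ?thesis by (auto simp: VT_def)
qed

lemma VT_insert: assumes "x \<notin> L" "L \<noteq> {}"
  shows "VT (insert x L) = (\<Union>t\<in>VT L. set (inserts x t))"
proof
  show "(\<Union>t\<in>VT L. set (inserts x t)) \<subseteq> VT (insert x L)"
    using leaves_inserts distinct_leaves_inserts assms by (fastforce simp: VT_def)
next
  show "VT (insert x L) \<subseteq> (\<Union>t\<in>VT L. set (inserts x t))"
  proof
    fix u assume u: "u \<in> VT (insert x L)"
    have "u \<noteq> Leaf x" using u assms by (auto simp: VT_def)
    then have "u \<in> set (inserts x (remove x u)) \<and> set (leaves (remove x u)) = set (leaves u) - {x}
      \<and> distinct (leaves (remove x u))" using remove_props u by (auto simp: VT_def)
    moreover have "set (leaves u) - {x} = L" using u assms by (auto simp: VT_def)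
    ultimately show "u \<in> (\<Union>t\<in>VT L. set (inserts x t))" by (auto simp: VT_def)
  qed
qed

lemma finite_VT: "finite L \<Longrightarrow> finite (VT L)"
proof (induct L rule: finite_induct)
  case empty then show ?case by (simp add: VT_empty)
next
  case (insert x F)
  show ?case
  proof (cases "F = {}")
    case True then show ?thesis by (simp add: VT_single)
  next
    case False then show ?thesis using insert VT_insert by simp
  qed
qed

lemma sum_VT_insert:
  assumes "finite L" "x \<notin> L" "L \<noteq> {}"
  shows "(\<Sum>u\<in>VT (insert x L). f u) = (\<Sum>t\<in>VT L. sum_list (map f (inserts x t)))"
proof -
  have "(\<Sum>u\<in>VT (insert x L). f u) = (\<Sum>t\<in>VT L. sum f (set (inserts x t)))"
    unfolding VT_insert[OF assms(2,3)]
  proof (rule sum.UNION_disjoint)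
    show "finite (VT L)" using finite_VT assms by simp
    show "\<forall>i\<in>VT L. finite (set (inserts x i))" by simp
    show "\<forall>i\<in>VT L. \<forall>j\<in>VT L. i \<noteq> j \<longrightarrow> set (inserts x i) \<inter> set (inserts x j) = {}"
    proof (intro ballI impI)
      fix i j assume ij: "i \<in> VT L" "j \<in> VT L" "i \<noteq> j"
      show "set (inserts x i) \<inter> set (inserts x j) = {}"
      proof (rule ccontr)
        assume "set (inserts x i) \<inter> set (inserts x j) \<noteq> {}"
        then obtain u where "u \<in> set (inserts x i)" "u \<in> set (inserts x j)" by blast
        then have "remove x u = i" "remove x u = j"
          using remove_inserts assms(2) ij by (auto simp: VT_def)
        then show False using ij by simp
      qed
    qed
  qed
  also have "\<dots> = (\<Sum>t\<in>VT L. sum_list (map f (inserts x t)))"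
    using distinct_inserts assms(2) by (intro sum.cong refl) (auto simp: VT_def sum_list_distinct_conv_sum_set)
  finally show ?thesis .
qed

lemma ins_depth:
  fixes g :: "nat \<Rightarrow> real"
  assumes "x \<notin> set (leaves t)" "distinct (leaves t)" "i \<in> set (leaves t)"
  shows "sum_list (map (\<lambda>u. g (leaf_depth u i)) (inserts x t)) =
    2 * (real (nnodes t) - real (leaf_depth t i) - 1) * g (leaf_depth t i)
    + 2 * (real (leaf_depth t i) + 1) * g (Suc (leaf_depth t i))"
  using assms
proof (induct t arbitrary: g)
  case (Leaf j) then show ?case by simp
next
  case (Node a b)
  have la: "u \<in> set (inserts x a) \<Longrightarrow> set (leaves u) = insert x (set (leaves a))" for u
    using leaves_inserts by blast
  show ?case
  proof (cases "i \<in> set (leaves a)")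
    case True
    have nb: "i \<notin> set (leaves b)" using True Node.prems by auto
    have m1: "map (\<lambda>u. g (leaf_depth u i)) (map (\<lambda>a'. Node a' b) (inserts x a))
        = map (\<lambda>u. (\<lambda>d. g (Suc d)) (leaf_depth u i)) (inserts x a)"
      using la True by auto
    have m2: "map (\<lambda>u. g (leaf_depth u i)) (map (\<lambda>b'. Node a b') (inserts x b))
        = map (\<lambda>_. g (Suc (leaf_depth a i))) (inserts x b)"
      using True by auto
    have IH: "sum_list (map (\<lambda>u. (\<lambda>d. g (Suc d)) (leaf_depth u i)) (inserts x a)) =
      2 * (real (nnodes a) - real (leaf_depth a i) - 1) * g (Suc (leaf_depth a i))
    + 2 * (real (leaf_depth a i) + 1) * g (Suc (Suc (leaf_depth a i)))"
      using Node.hyps(1)[of "\<lambda>d. g (Suc d)"] Node.prems True by auto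
    have ix: "i \<noteq> x" using True Node.prems(1) by auto
    show ?thesis using True nb ix
      apply (simp only: inserts.simps map_append sum_list_append m1 m2 IH)
      apply (simp add: sum_list_triv length_inserts)
      apply (simp add: algebra_simps)
      done
  next
    case False
    have ib: "i \<in> set (leaves b)" using False Node.prems by auto
    have ix: "i \<noteq> x" using ib Node.prems(1) by auto
    have m1: "map (\<lambda>u. g (leaf_depth u i)) (map (\<lambda>a'. Node a' b) (inserts x a))
        = map (\<lambda>_. g (Suc (leaf_depth b i))) (inserts x a)"
      using la False Node.prems(3) ib ix by auto
    have m2: "map (\<lambda>u. g (leaf_depth u i)) (map (\<lambda>b'. Node a b') (inserts x b))
        = map (\<lambda>u. (\<lambda>d. g (Suc d)) (leaf_depth u i)) (inserts x b)"
      using False by auto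
    have IH: "sum_list (map (\<lambda>u. (\<lambda>d. g (Suc d)) (leaf_depth u i)) (inserts x b)) =
      2 * (real (nnodes b) - real (leaf_depth b i) - 1) * g (Suc (leaf_depth b i))
    + 2 * (real (leaf_depth b i) + 1) * g (Suc (Suc (leaf_depth b i)))"
      using Node.hyps(2)[of "\<lambda>d. g (Suc d)"] Node.prems ib by auto
    show ?thesis using False ib ix
      apply (simp only: inserts.simps map_append sum_list_append m1 m2 IH)
      apply (simp add: sum_list_triv length_inserts)
      apply (simp add: algebra_simps)
      done
  qed
qed




lemma ins_lca:
  fixes g :: "nat \<Rightarrow> real"
  assumes "x \<notin> set (leaves t)" "distinct (leaves t)" "i \<in> set (leaves t)" "j \<in> set (leaves t)" "i \<noteq> j"
  shows "sum_list (map (\<lambda>u. g (lca_depth u i j)) (inserts x t)) =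
    2 * (real (nnodes t) - real (lca_depth t i j) - 1) * g (lca_depth t i j)
    + 2 * (real (lca_depth t i j) + 1) * g (Suc (lca_depth t i j))"
  using assms
proof (induct t arbitrary: g)
  case (Leaf k) then show ?case by simp
next
  case (Node a b)
  have la: "u \<in> set (inserts x a) \<Longrightarrow> set (leaves u) = insert x (set (leaves a))" for u
    using leaves_inserts by blast
  have lb: "u \<in> set (inserts x b) \<Longrightarrow> set (leaves u) = insert x (set (leaves b))" for u
    using leaves_inserts by blast
  have ix: "i \<noteq> x" "j \<noteq> x" using Node.prems by auto
  have dis: "set (leaves a) \<inter> set (leaves b) = {}" using Node.prems by auto
  consider (A) "i \<in> set (leaves a)" "j \<in> set (leaves a)" | (B) "i \<in> set (leaves b)" "j \<in> set (leaves b)"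
    | (C) "\<not> (i \<in> set (leaves a) \<and> j \<in> set (leaves a))" "\<not> (i \<in> set (leaves b) \<and> j \<in> set (leaves b))"
    by blast
  then show ?case
  proof cases
    case A
    have m1: "map (\<lambda>u. g (lca_depth u i j)) (map (\<lambda>a'. Node a' b) (inserts x a))
        = map (\<lambda>u. (\<lambda>d. g (Suc d)) (lca_depth u i j)) (inserts x a)"
      using la A by auto
    have m2: "map (\<lambda>u. g (lca_depth u i j)) (map (\<lambda>b'. Node a b') (inserts x b))
        = map (\<lambda>_. g (Suc (lca_depth a i j))) (inserts x b)"
      using A by auto
    have IH: "sum_list (map (\<lambda>u. (\<lambda>d. g (Suc d)) (lca_depth u i j)) (inserts x a)) =
      2 * (real (nnodes a) - real (lca_depth a i j) - 1) * g (Suc (lca_depth a i j))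
    + 2 * (real (lca_depth a i j) + 1) * g (Suc (Suc (lca_depth a i j)))"
      using Node.hyps(1)[of "\<lambda>d. g (Suc d)"] Node.prems A by auto
    show ?thesis using A ix
      apply (simp only: inserts.simps map_append sum_list_append m1 m2 IH)
      apply (simp add: sum_list_triv length_inserts)
      apply (simp add: algebra_simps)
      done
  next
    case B
    have nA: "i \<notin> set (leaves a)" using B dis by auto
    have m1: "map (\<lambda>u. g (lca_depth u i j)) (map (\<lambda>a'. Node a' b) (inserts x a))
        = map (\<lambda>_. g (Suc (lca_depth b i j))) (inserts x a)"
      using la B nA ix by auto
    have m2: "map (\<lambda>u. g (lca_depth u i j)) (map (\<lambda>b'. Node a b') (inserts x b))
        = map (\<lambda>u. (\<lambda>d. g (Suc d)) (lca_depth u i j)) (inserts x b)"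
      using nA lb B by auto
    have IH: "sum_list (map (\<lambda>u. (\<lambda>d. g (Suc d)) (lca_depth u i j)) (inserts x b)) =
      2 * (real (nnodes b) - real (lca_depth b i j) - 1) * g (Suc (lca_depth b i j))
    + 2 * (real (lca_depth b i j) + 1) * g (Suc (Suc (lca_depth b i j)))"
      using Node.hyps(2)[of "\<lambda>d. g (Suc d)"] Node.prems B by auto
    show ?thesis using B nA ix
      apply (simp only: inserts.simps map_append sum_list_append m1 m2 IH)
      apply (simp add: sum_list_triv length_inserts)
      apply (simp add: algebra_simps)
      done
  next
    case C
    have m1: "map (\<lambda>u. g (lca_depth u i j)) (map (\<lambda>a'. Node a' b) (inserts x a))
        = map (\<lambda>_. g 0) (inserts x a)"
      using la C ix by auto
    have m2: "map (\<lambda>u. g (lca_depth u i j)) (map (\<lambda>b'. Node a b') (inserts x b))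
        = map (\<lambda>_. g 0) (inserts x b)"
      using lb C ix by auto
    have z: "lca_depth (Node a b) i j = 0" using C by simp
    show ?thesis using C ix Node.prems(3,4)
      apply (simp only: inserts.simps map_append sum_list_append m1 m2 z)
      apply (simp add: sum_list_triv length_inserts)
      apply (auto simp: algebra_simps)
      done
  qed
qed




definition NN :: "nat set \<Rightarrow> real" where "NN L = real (card (VT L))"

lemma nnodes_VT: "t \<in> VT L \<Longrightarrow> real (nnodes t) = 2 * real (card L) - 1"
proof -
  assume t: "t \<in> VT L"
  have "length (leaves t) = card L" using t distinct_card[of "leaves t"] by (simp add: VT_def)
  then have "real (nnodes t + 1) = real (2 * card L)" using nnodes_leaves[of t] by metis
  then show ?thesis by simp
qed

lemma moment_step:
  fixes s :: "ptree \<Rightarrow> nat"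
  assumes L: "finite L" "x \<notin> L" "L \<noteq> {}" "card L = m"
  and H: "\<And>t g. t \<in> VT L \<Longrightarrow> sum_list (map (\<lambda>u. g (s u)) (inserts x t)) =
     2*(real (nnodes t) - real (s t) - 1) * g (s t) + 2 * (real (s t) + 1) * g (Suc (s t))"
  shows "NN (insert x L) = 2 * (2 * real m - 1) * NN L"
    "(\<Sum>u\<in>VT (insert x L). real (s u)) = 4 * real m * (\<Sum>t\<in>VT L. real (s t)) + 2 * NN L"
    "(\<Sum>u\<in>VT (insert x L). real (s u)^2) = 2 * (2 * real m + 1) * (\<Sum>t\<in>VT L. real (s t)^2)
        + 6 * (\<Sum>t\<in>VT L. real (s t)) + 2 * NN L"
proof -
  have n: "real (nnodes t) = 2 * real m - 1" if t: "t \<in> VT L" for t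
    using nnodes_VT[OF t] L(4) by simp
  have "NN (insert x L) = (\<Sum>u\<in>VT (insert x L). (1::real))"
    by (simp add: NN_def)
  also have "\<dots> = (\<Sum>t\<in>VT L. sum_list (map (\<lambda>u. (1::real)) (inserts x t)))"
    by (rule sum_VT_insert[OF L(1-3)])
  also have "\<dots> = (\<Sum>t\<in>VT L. 2 * (2 * real m - 1))"
  proof (intro sum.cong refl)
    fix t assume t: "t \<in> VT L"
    have "sum_list (map (\<lambda>u. (1::real)) (inserts x t)) = real (length (inserts x t))"
      by (simp add: sum_list_triv)
    also have "\<dots> = 2 * (2 * real m - 1)" unfolding length_inserts using n[OF t] by simp
    finally show "sum_list (map (\<lambda>u. (1::real)) (inserts x t)) = 2 * (2 * real m - 1)" .
  qed
  also have "\<dots> = 2 * (2 * real m - 1) * NN L" by (simp add: NN_def)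
  finally show "NN (insert x L) = 2 * (2 * real m - 1) * NN L" .
next
  have n: "real (nnodes t) = 2 * real m - 1" if t: "t \<in> VT L" for t
    using nnodes_VT[OF t] L(4) by simp
  have "(\<Sum>u\<in>VT (insert x L). real (s u)) = (\<Sum>t\<in>VT L. sum_list (map (\<lambda>u. real (s u)) (inserts x t)))"
    by (rule sum_VT_insert[OF L(1-3)])
  also have "\<dots> = (\<Sum>t\<in>VT L. 4 * real m * real (s t) + 2)"
  proof (intro sum.cong refl)
    fix t assume t: "t \<in> VT L"
    have "sum_list (map (\<lambda>u. real (s u)) (inserts x t)) =
       2*(real (nnodes t) - real (s t) - 1) * real (s t) + 2 * (real (s t) + 1) * real (Suc (s t))"
      using H[of t "\<lambda>d. real d"] t by simp
    also have "\<dots> = 4 * real m * real (s t) + 2"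
      unfolding n[OF t] of_nat_Suc by (simp add: algebra_simps)
    finally show "sum_list (map (\<lambda>u. real (s u)) (inserts x t)) = 4 * real m * real (s t) + 2" .
  qed
  also have "\<dots> = 4 * real m * (\<Sum>t\<in>VT L. real (s t)) + 2 * NN L"
    by (simp add: sum.distrib sum_distrib_left NN_def)
  finally show "(\<Sum>u\<in>VT (insert x L). real (s u)) = 4 * real m * (\<Sum>t\<in>VT L. real (s t)) + 2 * NN L" .
next
  have n: "real (nnodes t) = 2 * real m - 1" if t: "t \<in> VT L" for t
    using nnodes_VT[OF t] L(4) by simp
  have "(\<Sum>u\<in>VT (insert x L). real (s u)^2) = (\<Sum>t\<in>VT L. sum_list (map (\<lambda>u. real (s u)^2) (inserts x t)))"
    by (rule sum_VT_insert[OF L(1-3)])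
  also have "\<dots> = (\<Sum>t\<in>VT L. 2 * (2 * real m + 1) * real (s t)^2 + 6 * real (s t) + 2)"
  proof (intro sum.cong refl)
    fix t assume t: "t \<in> VT L"
    have "sum_list (map (\<lambda>u. real (s u)^2) (inserts x t)) =
       2*(real (nnodes t) - real (s t) - 1) * real (s t)^2 + 2 * (real (s t) + 1) * real (Suc (s t))^2"
      using H[of t "\<lambda>d. real d ^ 2"] t by simp
    also have "\<dots> = 2 * (2 * real m + 1) * real (s t)^2 + 6 * real (s t) + 2"
      unfolding n[OF t] of_nat_Suc by (simp add: power2_eq_square algebra_simps)
    finally show "sum_list (map (\<lambda>u. real (s u)^2) (inserts x t)) =
       2 * (2 * real m + 1) * real (s t)^2 + 6 * real (s t) + 2" .
  qed
  also have "\<dots> = 2 * (2 * real m + 1) * (\<Sum>t\<in>VT L. real (s t)^2) + 6 * (\<Sum>t\<in>VT L. real (s t)) + 2 * NN L"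
    by (simp add: sum.distrib sum_distrib_left NN_def)
  finally show "(\<Sum>u\<in>VT (insert x L). real (s u)^2) = 2 * (2 * real m + 1) * (\<Sum>t\<in>VT L. real (s t)^2)
        + 6 * (\<Sum>t\<in>VT L. real (s t)) + 2 * NN L" .
qed

definition rr :: "nat \<Rightarrow> real" where
  "rr m = real (dfact (2*m-2)) / real (dfact (2*m-3))"

lemma dfact_pos: "dfact k > 0" by (induct k rule: dfact.induct) auto

lemma rr_step: assumes "m \<ge> 1" shows "rr (Suc m) * (2 * real m - 1) = 2 * real m * rr m"
proof -
  obtain k where k: "m = Suc k" using assms by (cases m) auto
  have e1: "dfact (2 * Suc (Suc k) - 2) = (2*k+2) * dfact (2 * Suc k - 2)"
    by (simp add: numeral_2_eq_2)
  have e2: "dfact (2 * Suc (Suc k) - 3) = (2*k+1) * dfact (2 * Suc k - 3)"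
  proof (cases k)
    case 0 then show ?thesis by (simp add: numeral_2_eq_2 numeral_3_eq_3)
  next
    case (Suc j)
    have "2 * Suc (Suc k) - 3 = Suc (Suc (2*j+1))" "2 * Suc k - 3 = 2*j+1" using Suc by auto
    then show ?thesis using Suc by simp
  qed
  have p: "real (dfact (2 * Suc k - 3)) > 0" "real (dfact (2 * Suc k - 2)) > 0" using dfact_pos by auto
  define A where "A = real (dfact (2 * Suc k - 2))"
  define B where "B = real (dfact (2 * Suc k - 3))"
  have r1: "rr (Suc m) = (2*real k+2) * A / ((2*real k+1) * B)"
    unfolding rr_def k e1 e2 A_def B_def by (simp add: algebra_simps)
  have r0: "rr m = A / B" unfolding rr_def k A_def B_def by simp
  have "A > 0" "B > 0" using p A_def B_def by auto
  then have d: "B \<noteq> 0" "2*real k + 1 \<noteq> 0" "1 + 2*real k \<noteq> 0" by auto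
  have km: "2 * real m - 1 = 2*real k + 1" using k by simp
  have "rr (Suc m) * (2 * real m - 1) = (2*real k+2) * A / ((2*real k+1) * B) * (2*real k + 1)"
    unfolding r1 km by simp
  also have "\<dots> = (2*real k+2) * A / B" using d by simp
  also have "\<dots> = 2 * real m * rr m" unfolding r0 using k by simp
  finally show ?thesis .
qed

lemma rr1: "rr 1 = 1" by (simp add: rr_def)
lemma rr2: "rr 2 = 2" by (simp add: rr_def numeral_2_eq_2)




lemma alg1: fixes N r r' m :: real
  assumes hr: "r' * (2*m - 1) = 2*m*r"
  shows "4*m*(N*(r - 1)) + 2*N = 2*(2*m-1)*N*(r' - 1)"
proof -
  have "2*(2*m-1)*N*(r' - 1) = 2*N*(r'*(2*m-1)) - 2*(2*m-1)*N" by (simp add: algebra_simps)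
  also have "\<dots> = 2*N*(2*m*r) - 2*(2*m-1)*N" by (simp only: hr)
  finally show ?thesis by (simp add: algebra_simps)
qed

lemma alg2: fixes N r r' m :: real
  assumes hr: "r' * (2*m - 1) = 2*m*r"
  shows "2*(2*m+1)*(N*(4*m - 1 - 3*r)) + 6*(N*(r - 1)) + 2*N = 2*(2*m-1)*N*(4*(m+1) - 1 - 3*r')"
proof -
  have "2*(2*m-1)*N*(4*(m+1) - 1 - 3*r') = 2*(2*m-1)*N*(4*m+3) - 6*N*(r'*(2*m-1))" by (simp add: algebra_simps)
  also have "\<dots> = 2*(2*m-1)*N*(4*m+3) - 6*N*(2*m*r)" by (simp only: hr)
  finally show ?thesis by (simp add: algebra_simps)
qed

lemma alg3: fixes N r r' m :: real
  assumes hr: "r' * (2*m - 1) = 2*m*r"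
  shows "4*m*(N*(r/2 - 1)) + 2*N = 2*(2*m-1)*N*(r'/2 - 1)"
proof -
  have "2*(2*m-1)*N*(r'/2 - 1) = N*(r'*(2*m-1)) - 2*(2*m-1)*N" by (simp add: algebra_simps)
  also have "\<dots> = N*(2*m*r) - 2*(2*m-1)*N" by (simp only: hr)
  finally show ?thesis by (simp add: algebra_simps)
qed

lemma alg4: fixes N r r' m :: real
  assumes hr: "r' * (2*m - 1) = 2*m*r"
  shows "2*(2*m+1)*(N*((4*m+1)/3 - 3/2*r)) + 6*(N*(r/2 - 1)) + 2*N = 2*(2*m-1)*N*((4*(m+1)+1)/3 - 3/2*r')"
proof -
  have "2*(2*m-1)*N*((4*(m+1)+1)/3 - 3/2*r') = 2*(2*m-1)*N*((4*m+5)/3) - 3*N*(r'*(2*m-1))" by (simp add: algebra_simps)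
  also have "\<dots> = 2*(2*m-1)*N*((4*m+5)/3) - 3*N*(2*m*r)" by (simp only: hr)
  finally show ?thesis by (simp add: field_simps)
qed

lemma depth_moments:
  "finite L \<Longrightarrow> i \<in> L \<Longrightarrow> card L = m \<Longrightarrow> NN L > 0 \<and>
    (\<Sum>t\<in>VT L. real (leaf_depth t i)) = NN L * (rr m - 1) \<and>
    (\<Sum>t\<in>VT L. real (leaf_depth t i)^2) = NN L * (4 * real m - 1 - 3 * rr m)"
proof (induct m arbitrary: L)
  case 0 then show ?case by auto
next
  case (Suc m)
  show ?case
  proof (cases "m = 0")
    case True
    then have "card L = 1" using Suc.prems by simp
    then obtain y where "L = {y}" by (rule card_1_singletonE)
    then have "L = {i}" using Suc.prems by simp
    moreover have "rr (Suc 0) = 1" using rr1 by simp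
    ultimately show ?thesis using True by (simp add: VT_single NN_def)
  next
    case False
    have "\<not> L \<subseteq> {i}"
    proof
      assume "L \<subseteq> {i}"
      then have "card L \<le> card {i}" by (intro card_mono) auto
      then show False using Suc.prems False by auto
    qed
    then obtain x where x: "x \<in> L" "x \<noteq> i" by blast
    define L' where "L' = L - {x}"
    have L': "finite L'" "x \<notin> L'" "L' \<noteq> {}" "card L' = m" "i \<in> L'" "L = insert x L'"
      using Suc.prems x by (auto simp: L'_def)
    note IH = Suc.hyps[OF L'(1) L'(5) L'(4)]
    have H: "\<And>t g. t \<in> VT L' \<Longrightarrow> sum_list (map (\<lambda>u. g (leaf_depth u i)) (inserts x t)) =
     2*(real (nnodes t) - real (leaf_depth t i) - 1) * g (leaf_depth t i)
     + 2 * (real (leaf_depth t i) + 1) * g (Suc (leaf_depth t i))"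
    proof -
      fix t g assume t: "t \<in> VT L'"
      have a: "x \<notin> set (leaves t)" "distinct (leaves t)" "i \<in> set (leaves t)" using t L' by (auto simp: VT_def)
      show "sum_list (map (\<lambda>u. g (leaf_depth u i)) (inserts x t)) =
     2*(real (nnodes t) - real (leaf_depth t i) - 1) * g (leaf_depth t i)
     + 2 * (real (leaf_depth t i) + 1) * g (Suc (leaf_depth t i))" by (rule ins_depth[OF a])
    qed
    note MS = moment_step[OF L'(1-4), of "\<lambda>t. leaf_depth t i", OF H]
    have hr: "rr (Suc m) * (2 * real m - 1) = 2 * real m * rr m" using rr_step False by simp
    have m1: "2 * real m - 1 > 0" using False by simp
    have IH1: "(\<Sum>t\<in>VT L'. real (leaf_depth t i)) = NN L' * (rr m - 1)" using IH by blast
    have IH2: "(\<Sum>t\<in>VT L'. real (leaf_depth t i)^2) = NN L' * (4 * real m - 1 - 3 * rr m)" using IH by blast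
    have P: "NN L' > 0" using IH by blast
    have NL: "NN L = 2*(2*real m-1)*NN L'" using MS(1) L'(6) by simp
    have pos: "NN L > 0" unfolding NL using P m1 by simp
    have S1: "(\<Sum>t\<in>VT L. real (leaf_depth t i)) = 4 * real m * (\<Sum>t\<in>VT L'. real (leaf_depth t i)) + 2 * NN L'"
      using MS(2) L'(6) by simp
    have S2: "(\<Sum>t\<in>VT L. real (leaf_depth t i)^2) = 2 * (2 * real m + 1) * (\<Sum>t\<in>VT L'. real (leaf_depth t i)^2)
        + 6 * (\<Sum>t\<in>VT L'. real (leaf_depth t i)) + 2 * NN L'"
      using MS(3) L'(6) by simp
    have "(\<Sum>t\<in>VT L. real (leaf_depth t i)) = NN L * (rr (Suc m) - 1)"
      unfolding S1 NL IH1 by (rule alg1[OF hr])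
    moreover have "(\<Sum>t\<in>VT L. real (leaf_depth t i)^2) = NN L * (4 * real (Suc m) - 1 - 3 * rr (Suc m))"
      unfolding S2 NL IH1 IH2 using alg2[OF hr, of "NN L'"] by simp
    ultimately show ?thesis using pos by blast
  qed
qed




lemma lca_moments:
  "finite L \<Longrightarrow> i \<in> L \<Longrightarrow> j \<in> L \<Longrightarrow> i \<noteq> j \<Longrightarrow> card L = m \<Longrightarrow> NN L > 0 \<and>
    (\<Sum>t\<in>VT L. real (lca_depth t i j)) = NN L * (rr m / 2 - 1) \<and>
    (\<Sum>t\<in>VT L. real (lca_depth t i j)^2) = NN L * ((4 * real m + 1) / 3 - 3 / 2 * rr m)"
proof (induct m arbitrary: L)
  case 0 then show ?case by auto
next
  case (Suc m)
  have c2: "card {i, j} \<le> card L" using Suc.prems by (intro card_mono) auto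
  show ?case
  proof (cases "m \<le> 1")
    case True
    then have m1: "m = 1" using c2 Suc.prems by auto
    have "L = {i, j}" using c2 Suc.prems m1 by (intro card_subset_eq[symmetric]) auto
    then have L: "L = insert j {i}" by auto
    have ji: "j \<notin> {i}" using Suc.prems by auto
    have e: "(\<Sum>u\<in>VT L. f u) = f (Node (Leaf i) (Leaf j)) + f (Node (Leaf j) (Leaf i))" for f :: "ptree \<Rightarrow> real"
      unfolding L by (subst sum_VT_insert[OF _ ji]) (auto simp: VT_single)
    have NL: "NN L = 2" using e[of "\<lambda>_. 1"] by (simp add: NN_def)
    have "rr (Suc m) = 2" using m1 rr2 by (simp add: numeral_2_eq_2)
    then show ?thesis using NL Suc.prems m1 by (simp add: e)
  next
    case False
    have "\<not> L \<subseteq> {i, j}"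
    proof
      assume "L \<subseteq> {i, j}"
      then have "card L \<le> card {i, j}" by (intro card_mono) auto
      also have "\<dots> \<le> 2" by (simp add: card_insert_le_m1)
      finally show False using Suc.prems False by auto
    qed
    then obtain x where x: "x \<in> L" "x \<noteq> i" "x \<noteq> j" by blast
    define L' where "L' = L - {x}"
    have L': "finite L'" "x \<notin> L'" "L' \<noteq> {}" "card L' = m" "i \<in> L'" "j \<in> L'" "L = insert x L'"
      using Suc.prems x by (auto simp: L'_def)
    note IH = Suc.hyps[OF L'(1) L'(5) L'(6) Suc.prems(4) L'(4)]
    have H: "\<And>t g. t \<in> VT L' \<Longrightarrow> sum_list (map (\<lambda>u. g (lca_depth u i j)) (inserts x t)) =
     2*(real (nnodes t) - real (lca_depth t i j) - 1) * g (lca_depth t i j)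
     + 2 * (real (lca_depth t i j) + 1) * g (Suc (lca_depth t i j))"
    proof -
      fix t g assume t: "t \<in> VT L'"
      have a: "x \<notin> set (leaves t)" "distinct (leaves t)" "i \<in> set (leaves t)" "j \<in> set (leaves t)" "i \<noteq> j"
        using t L' Suc.prems(4) by (auto simp: VT_def)
      show "sum_list (map (\<lambda>u. g (lca_depth u i j)) (inserts x t)) =
     2*(real (nnodes t) - real (lca_depth t i j) - 1) * g (lca_depth t i j)
     + 2 * (real (lca_depth t i j) + 1) * g (Suc (lca_depth t i j))" by (rule ins_lca[OF a])
    qed
    note MS = moment_step[OF L'(1-4), of "\<lambda>t. lca_depth t i j", OF H]
    have hr: "rr (Suc m) * (2 * real m - 1) = 2 * real m * rr m" using rr_step False by simp
    have m1: "2 * real m - 1 > 0" using False by simp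
    have IH1: "(\<Sum>t\<in>VT L'. real (lca_depth t i j)) = NN L' * (rr m / 2 - 1)" using IH by blast
    have IH2: "(\<Sum>t\<in>VT L'. real (lca_depth t i j)^2) = NN L' * ((4 * real m + 1) / 3 - 3 / 2 * rr m)" using IH by blast
    have P: "NN L' > 0" using IH by blast
    have NL: "NN L = 2*(2*real m-1)*NN L'" using MS(1) L'(7) by simp
    have pos: "NN L > 0" unfolding NL using P m1 by simp
    have S1: "(\<Sum>t\<in>VT L. real (lca_depth t i j)) = 4 * real m * (\<Sum>t\<in>VT L'. real (lca_depth t i j)) + 2 * NN L'"
      using MS(2) L'(7) by simp
    have S2: "(\<Sum>t\<in>VT L. real (lca_depth t i j)^2) = 2 * (2 * real m + 1) * (\<Sum>t\<in>VT L'. real (lca_depth t i j)^2)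
        + 6 * (\<Sum>t\<in>VT L'. real (lca_depth t i j)) + 2 * NN L'"
      using MS(3) L'(7) by simp
    have "(\<Sum>t\<in>VT L. real (lca_depth t i j)) = NN L * (rr (Suc m) / 2 - 1)"
      unfolding S1 NL IH1 by (rule alg3[OF hr])
    moreover have "(\<Sum>t\<in>VT L. real (lca_depth t i j)^2) = NN L * ((4 * real (Suc m) + 1) / 3 - 3 / 2 * rr (Suc m))"
      unfolding S2 NL IH1 IH2 using alg4[OF hr, of "NN L'"] by simp
    ultimately show ?thesis using pos by blast
  qed
qed




inductive_cases isoLeafE: "tree_iso (Leaf i) t"
inductive_cases isoNodeE: "tree_iso (Node a b) t"

lemma iso_refl: "tree_iso t t"
  by (induct t) (auto intro: tree_iso.intros)

lemma iso_leaves: "tree_iso s t \<Longrightarrow> set (leaves s) = set (leaves t) \<and> length (leaves s) = length (leaves t)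
   \<and> (distinct (leaves s) \<longleftrightarrow> distinct (leaves t))"
  by (induct rule: tree_iso.induct) auto

lemma iso_sym: "tree_iso s t \<Longrightarrow> tree_iso t s"
  by (induct rule: tree_iso.induct) (auto intro: tree_iso.intros)

lemma iso_trans: "tree_iso s t \<Longrightarrow> tree_iso t u \<Longrightarrow> tree_iso s u"
proof (induct arbitrary: u rule: tree_iso.induct)
  case (iso_leaf i) then show ?case by simp
next
  case (iso_same a a' b b')
  from iso_same.prems show ?case
    by (rule isoNodeE) (auto intro: tree_iso.intros iso_same.hyps)
next
  case (iso_swap a b' b a')
  from iso_swap.prems show ?case
    by (rule isoNodeE) (auto intro: tree_iso.intros iso_swap.hyps)
qed

lemma iso_depth: "tree_iso s t \<Longrightarrow> distinct (leaves s) \<Longrightarrow> i \<in> set (leaves s) \<Longrightarrow>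
   leaf_depth s i = leaf_depth t i"
proof (induct rule: tree_iso.induct)
  case (iso_leaf i) then show ?case by simp
next
  case (iso_same a a' b b')
  then show ?case using iso_leaves[OF iso_same.hyps(1)] iso_leaves[OF iso_same.hyps(3)] by auto
next
  case (iso_swap a b' b a')
  then show ?case using iso_leaves[OF iso_swap.hyps(1)] iso_leaves[OF iso_swap.hyps(3)] by auto
qed

lemma iso_lca: "tree_iso s t \<Longrightarrow> distinct (leaves s) \<Longrightarrow> i \<in> set (leaves s) \<Longrightarrow> j \<in> set (leaves s) \<Longrightarrow>
   lca_depth s i j = lca_depth t i j"
proof (induct rule: tree_iso.induct)
  case (iso_leaf i) then show ?case by simp
next
  case (iso_same a a' b b')
  then show ?case using iso_leaves[OF iso_same.hyps(1)] iso_leaves[OF iso_same.hyps(3)] by auto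
next
  case (iso_swap a b' b a')
  then show ?case using iso_leaves[OF iso_swap.hyps(1)] iso_leaves[OF iso_swap.hyps(3)] by auto
qed

lemma leaves_length_pos: "length (leaves t) \<ge> 1"
  using leaves_ne[of t] by (cases "leaves t") auto

lemma class_card: "distinct (leaves s) \<Longrightarrow> finite {t. tree_iso s t} \<and> card {t. tree_iso s t} = 2 ^ (length (leaves s) - 1)"
proof (induct s)
  case (Leaf i)
  have "{t. tree_iso (Leaf i) t} = {Leaf i}" by (auto elim: isoLeafE intro: tree_iso.intros)
  then show ?case by simp
next
  case (Node a b)
  define A where "A = {t. tree_iso a t}"
  define B where "B = {t. tree_iso b t}"
  have fa: "finite A" "card A = 2 ^ (length (leaves a) - 1)" using Node by (auto simp: A_def)
  have fb: "finite B" "card B = 2 ^ (length (leaves b) - 1)" using Node by (auto simp: B_def)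
  have eq: "{t. tree_iso (Node a b) t} = (\<lambda>(x,y). Node x y) ` (A \<times> B) \<union> (\<lambda>(x,y). Node y x) ` (A \<times> B)"
  proof
    show "{t. tree_iso (Node a b) t} \<subseteq> (\<lambda>(x,y). Node x y) ` (A \<times> B) \<union> (\<lambda>(x,y). Node y x) ` (A \<times> B)"
    proof
      fix t assume "t \<in> {t. tree_iso (Node a b) t}"
      then have "tree_iso (Node a b) t" by simp
      then show "t \<in> (\<lambda>(x,y). Node x y) ` (A \<times> B) \<union> (\<lambda>(x,y). Node y x) ` (A \<times> B)"
      proof (rule isoNodeE)
        fix a' b' assume h: "t = Node a' b'" "tree_iso a a'" "tree_iso b b'"
        have "(a', b') \<in> A \<times> B" using h by (simp add: A_def B_def)
        then show ?thesis unfolding h(1) by (intro UnI1 rev_image_eqI[of "(a',b')"]) auto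
      next
        fix a' b' assume h: "t = Node a' b'" "tree_iso a b'" "tree_iso b a'"
        have "(b', a') \<in> A \<times> B" using h by (simp add: A_def B_def)
        then show ?thesis unfolding h(1) by (intro UnI2 rev_image_eqI[of "(b',a')"]) auto
      qed
    qed
    show "(\<lambda>(x,y). Node x y) ` (A \<times> B) \<union> (\<lambda>(x,y). Node y x) ` (A \<times> B) \<subseteq> {t. tree_iso (Node a b) t}"
      by (auto simp: A_def B_def intro: tree_iso.intros)
  qed
  have dis: "(\<lambda>(x,y). Node x y) ` (A \<times> B) \<inter> (\<lambda>(x,y). Node y x) ` (A \<times> B) = {}"
  proof -
    have "set (leaves a) \<inter> set (leaves b) = {}" using Node.prems by auto
    moreover have "set (leaves a) \<noteq> {}" "set (leaves b) \<noteq> {}" using leaves_ne by auto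
    ultimately have "x \<in> A \<Longrightarrow> x \<in> B \<Longrightarrow> False" for x
      using iso_leaves unfolding A_def B_def by (metis Int_absorb mem_Collect_eq)
    then show ?thesis by auto
  qed
  have i1: "inj_on (\<lambda>(x,y). Node x y) (A \<times> B)" by (auto simp: inj_on_def)
  have i2: "inj_on (\<lambda>(x,y). Node y x) (A \<times> B)" by (auto simp: inj_on_def)
  have "card {t. tree_iso (Node a b) t} = card (A \<times> B) + card (A \<times> B)"
    unfolding eq using fa fb dis by (simp add: card_Un_disjoint card_image[OF i1] card_image[OF i2])
  also have "\<dots> = 2 ^ (length (leaves (Node a b)) - 1)"
  proof -
    obtain p where p: "length (leaves a) = Suc p" using leaves_length_pos[of a] by (cases "length (leaves a)") auto
    obtain q where q: "length (leaves b) = Suc q" using leaves_length_pos[of b] by (cases "length (leaves b)") auto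
    have "card (A \<times> B) + card (A \<times> B) = 2 ^ p * 2 ^ q * 2" using fa fb p q by (simp add: card_cartesian_product)
    also have "\<dots> = 2 ^ (Suc (p + q))" by (simp add: power_add)
    also have "Suc (p + q) = length (leaves (Node a b)) - 1" using p q by simp
    finally show ?thesis .
  qed
  finally show ?case using eq fa fb by simp
qed




abbreviation "RR \<equiv> {(s, t). tree_iso s t}"

lemma phylo_eq: "phylo_trees n = VT {1..n} // RR"
  unfolding phylo_trees_def VT_def valid_tree_def by simp

lemma class_eq: "RR `` {x} = {t. tree_iso x t}" by auto

lemma quot_sum:
  fixes g :: "ptree \<Rightarrow> real"
  assumes inv: "\<And>t u. t \<in> VT {1..n} \<Longrightarrow> tree_iso t u \<Longrightarrow> g u = g t"
  shows "(\<Sum>C\<in>phylo_trees n. g (rep C)) * 2^(n-1) = (\<Sum>t\<in>VT {1..n}. g t)"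
proof -
  define V where "V = VT {1..n}"
  have fV: "finite V" unfolding V_def by (rule finite_VT) simp
  have Q: "phylo_trees n = (\<lambda>x. {t. tree_iso x t}) ` V"
    unfolding phylo_eq V_def quotient_def class_eq by auto
  have cls_sub: "{t. tree_iso x t} \<subseteq> V" if "x \<in> V" for x
    using that iso_leaves unfolding V_def VT_def by auto
  have cls_card: "finite {t. tree_iso x t} \<and> card {t. tree_iso x t} = 2^(n-1)" if "x \<in> V" for x
  proof -
    have "length (leaves x) = n" using that distinct_card[of "leaves x"] by (simp add: V_def VT_def)
    then show ?thesis using class_card[of x] that by (simp add: V_def VT_def)
  qed
  have U: "\<Union>(phylo_trees n) = V"
    unfolding Q using cls_sub iso_refl by blast
  have D: "\<forall>A\<in>phylo_trees n. \<forall>B\<in>phylo_trees n. A \<noteq> B \<longrightarrow> A \<inter> B = {}"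
  proof (intro ballI impI)
    fix A B assume A: "A \<in> phylo_trees n" and B: "B \<in> phylo_trees n" and ne: "A \<noteq> B"
    obtain x where x: "x \<in> V" "A = {t. tree_iso x t}" using A Q by auto
    obtain y where y: "y \<in> V" "B = {t. tree_iso y t}" using B Q by auto
    show "A \<inter> B = {}"
    proof (rule ccontr)
      assume "A \<inter> B \<noteq> {}"
      then obtain u where "tree_iso x u" "tree_iso y u" using x y by auto
      then have "tree_iso x y" using iso_sym iso_trans by blast
      then have "A = B" unfolding x y using iso_sym iso_trans by blast
      then show False using ne by simp
    qed
  qed
  have F: "\<forall>A\<in>phylo_trees n. finite A" using cls_card Q by auto
  have "(\<Sum>t\<in>V. g t) = (\<Sum>C\<in>phylo_trees n. \<Sum>t\<in>C. g t)"
    using sum.Union_disjoint[OF F D, of g] U by simp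
  also have "\<dots> = (\<Sum>C\<in>phylo_trees n. g (rep C) * 2^(n-1))"
  proof (rule sum.cong[OF refl])
    fix C assume C: "C \<in> phylo_trees n"
    obtain x where x: "x \<in> V" "C = {t. tree_iso x t}" using C Q by auto
    have "rep C \<in> C" unfolding rep_def using x iso_refl by (metis (mono_tags) mem_Collect_eq someI)
    then have gr: "g (rep C) = g x" using inv x by (auto simp: V_def)
    have "(\<Sum>t\<in>C. g t) = (\<Sum>t\<in>C. g (rep C))"
      using inv x gr by (intro sum.cong refl) (auto simp: V_def)
    also have "\<dots> = g (rep C) * 2^(n-1)" using cls_card[OF x(1)] x(2) by simp
    finally show "(\<Sum>t\<in>C. g t) = g (rep C) * 2^(n-1)" .
  qed
  also have "\<dots> = (\<Sum>C\<in>phylo_trees n. g (rep C)) * 2^(n-1)" by (simp add: sum_distrib_right)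
  finally show ?thesis by (simp add: V_def)
qed

lemma coph_inv: "t \<in> VT {1..n} \<Longrightarrow> tree_iso t t' \<Longrightarrow> i \<in> {1..n} \<Longrightarrow> j \<in> {1..n} \<Longrightarrow>
  cophenetic t i j = cophenetic t' i j"
  unfolding cophenetic_def VT_def using iso_depth iso_lca by auto

lemma dist_inv1: "t \<in> VT {1..n} \<Longrightarrow> tree_iso t t' \<Longrightarrow> coph_dist_sq n t' u = coph_dist_sq n t u"
  unfolding coph_dist_sq_def by (intro sum.cong refl) (simp add: coph_inv)

lemma dist_inv2: "t \<in> VT {1..n} \<Longrightarrow> tree_iso t t' \<Longrightarrow> coph_dist_sq n u t' = coph_dist_sq n u t"
  unfolding coph_dist_sq_def by (intro sum.cong refl) (simp add: coph_inv)

lemma expected_eq: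
  "expected_D2_uniform n = (\<Sum>t\<in>VT {1..n}. \<Sum>u\<in>VT {1..n}. coph_dist_sq n t u) / (real (card (VT {1..n})))^2"
proof -
  define k :: real where "k = 2^(n-1)"
  have k0: "k \<noteq> 0" by (simp add: k_def)
  have c: "real (card (phylo_trees n)) * k = real (card (VT {1..n}))"
    using quot_sum[where g="\<lambda>_. 1" and n=n] by (simp add: k_def)
  have "(\<Sum>C\<in>phylo_trees n. \<Sum>D\<in>phylo_trees n. coph_dist_sq n (rep C) (rep D)) * k * k
      = (\<Sum>C\<in>phylo_trees n. (\<Sum>D\<in>phylo_trees n. coph_dist_sq n (rep C) (rep D)) * k) * k"
    by (simp add: sum_distrib_right)
  also have "\<dots> = (\<Sum>C\<in>phylo_trees n. (\<Sum>u\<in>VT {1..n}. coph_dist_sq n (rep C) u)) * k"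
  proof -
    have inner: "(\<Sum>D\<in>phylo_trees n. coph_dist_sq n (rep C) (rep D)) * k = (\<Sum>u\<in>VT {1..n}. coph_dist_sq n (rep C) u)" for C
      unfolding k_def by (rule quot_sum) (rule dist_inv2)
    show ?thesis by (simp only: inner)
  qed
  also have "\<dots> = (\<Sum>t\<in>VT {1..n}. \<Sum>u\<in>VT {1..n}. coph_dist_sq n t u)"
    unfolding k_def
  proof (rule quot_sum)
    fix t t' assume "t \<in> VT {1..n}" "tree_iso t t'"
    then show "(\<Sum>u\<in>VT {1..n}. coph_dist_sq n t' u) = (\<Sum>u\<in>VT {1..n}. coph_dist_sq n t u)"
      using dist_inv1 by simp
  qed
  finally have e: "(\<Sum>C\<in>phylo_trees n. \<Sum>D\<in>phylo_trees n. coph_dist_sq n (rep C) (rep D)) * k * k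
      = (\<Sum>t\<in>VT {1..n}. \<Sum>u\<in>VT {1..n}. coph_dist_sq n t u)" .
  show ?thesis unfolding expected_D2_uniform_def e[symmetric] c[symmetric] using k0
    by (simp add: power2_eq_square)
qed




lemma sq_sum: fixes a :: "'a \<Rightarrow> real" assumes "finite V"
  shows "(\<Sum>t\<in>V. \<Sum>u\<in>V. (a t - a u)^2) = 2*real (card V)*(\<Sum>t\<in>V. a t^2) - 2*(\<Sum>t\<in>V. a t)^2"
proof -
  have "(\<Sum>t\<in>V. \<Sum>u\<in>V. (a t - a u)^2) = (\<Sum>t\<in>V. real (card V) * a t^2 - 2 * a t * (\<Sum>u\<in>V. a u) + (\<Sum>u\<in>V. a u^2))"
    by (intro sum.cong refl) (simp add: power2_diff sum.distrib sum_subtractf sum_distrib_left)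
  also have "\<dots> = (\<Sum>t\<in>V. real (card V) * a t^2) - (\<Sum>t\<in>V. 2 * a t * (\<Sum>u\<in>V. a u)) + (\<Sum>t\<in>V. (\<Sum>u\<in>V. a u^2))"
    by (simp only: sum.distrib sum_subtractf)
  also have "(\<Sum>t\<in>V. real (card V) * a t^2) = real (card V) * (\<Sum>t\<in>V. a t^2)"
    by (simp add: sum_distrib_left)
  also have "(\<Sum>t\<in>V. 2 * a t * (\<Sum>u\<in>V. a u)) = 2 * (\<Sum>t\<in>V. a t) * (\<Sum>u\<in>V. a u)"
    by (simp only: sum_distrib_right[symmetric] sum_distrib_left[symmetric])
  also have "(\<Sum>t\<in>V. (\<Sum>u\<in>V. a u^2)) = real (card V) * (\<Sum>t\<in>V. a t^2)"
    by simp
  also have "real (card V) * (\<Sum>t\<in>V. a t^2) - 2 * (\<Sum>t\<in>V. a t) * (\<Sum>u\<in>V. a u) + real (card V) * (\<Sum>t\<in>V. a t^2)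
     = 2*real (card V)*(\<Sum>t\<in>V. a t^2) - 2*(\<Sum>t\<in>V. a t)^2"
    by (simp add: power2_eq_square)
  finally show ?thesis .
qed

lemma swap4: "(\<Sum>t\<in>A. \<Sum>u\<in>A. \<Sum>i\<in>I. \<Sum>j\<in>J i. G t u i j) = (\<Sum>i\<in>I. \<Sum>j\<in>J i. \<Sum>t\<in>A. \<Sum>u\<in>A. G t u i j)"
proof -
  have "(\<Sum>t\<in>A. \<Sum>u\<in>A. \<Sum>i\<in>I. \<Sum>j\<in>J i. G t u i j) = (\<Sum>t\<in>A. \<Sum>i\<in>I. \<Sum>u\<in>A. \<Sum>j\<in>J i. G t u i j)"
    by (rule sum.cong[OF refl], rule sum.swap)
  also have "\<dots> = (\<Sum>i\<in>I. \<Sum>t\<in>A. \<Sum>u\<in>A. \<Sum>j\<in>J i. G t u i j)" by (rule sum.swap)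
  also have "\<dots> = (\<Sum>i\<in>I. \<Sum>t\<in>A. \<Sum>j\<in>J i. \<Sum>u\<in>A. G t u i j)"
    by (rule sum.cong[OF refl], rule sum.cong[OF refl], rule sum.swap)
  also have "\<dots> = (\<Sum>i\<in>I. \<Sum>j\<in>J i. \<Sum>t\<in>A. \<Sum>u\<in>A. G t u i j)"
    by (rule sum.cong[OF refl], rule sum.swap)
  finally show ?thesis .
qed

lemma gauss_sum: "(\<Sum>i=1..n. real (n - i)) = real n * (real n - 1) / 2"
proof (induct n)
  case 0 then show ?case by simp
next
  case (Suc n)
  have "(\<Sum>i=1..Suc n. real (Suc n - i)) = (\<Sum>i=1..n. real (Suc n - i))"
    by simp
  also have "\<dots> = (\<Sum>i=1..n. real (n - i) + 1)"
    by (intro sum.cong refl) (auto simp: Suc_diff_le of_nat_Suc)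
  also have "\<dots> = real n * (real n - 1) / 2 + real n" using Suc by (simp add: sum.distrib)
  also have "\<dots> = real (Suc n) * (real (Suc n) - 1) / 2" by (simp add: field_simps)
  finally show ?case .
qed

theorem theorem3:
  fixes n :: nat
  assumes "n \<ge> 2"
  shows "expected_D2_uniform n =
           (4 * real n ^ 3 + 18 * real n ^ 2 - 10 * real n) / 3
         - real n * (real n + 3) / 2 * (real (dfact (2*n - 2)) / real (dfact (2*n - 3)))
         - real n * (real n + 7) / 4 * (real (dfact (2*n - 2)) / real (dfact (2*n - 3)))^2"
proof -
  define V where "V = VT {1..n}"
  define N where "N = NN {1..n}"
  define r where "r = rr n"
  have fV: "finite V" unfolding V_def by (rule finite_VT) simp
  have cN: "real (card V) = N" by (simp add: N_def NN_def V_def)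
  define A where "A = (4 * real n - 1 - 3 * r) - (r - 1)^2"
  define B where "B = ((4 * real n + 1) / 3 - 3 / 2 * r) - (r / 2 - 1)^2"
  define P where "P i j = (\<Sum>t\<in>V. \<Sum>u\<in>V. (real (cophenetic t i j) - real (cophenetic u i j))^2)" for i j
  have Npos: "N > 0" using depth_moments[of "{1..n}" 1 n] assms by (simp add: N_def)
  have Pii: "P i i = 2 * N^2 * A" if "i \<in> {1..n}" for i
  proof -
    have m: "(\<Sum>t\<in>V. real (leaf_depth t i)) = N * (r - 1)"
      "(\<Sum>t\<in>V. real (leaf_depth t i)^2) = N * (4 * real n - 1 - 3 * r)"
      using depth_moments[of "{1..n}" i n] that by (simp_all add: V_def N_def r_def)
    have "P i i = 2*real (card V)*(\<Sum>t\<in>V. real (leaf_depth t i)^2) - 2*(\<Sum>t\<in>V. real (leaf_depth t i))^2"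
      unfolding P_def cophenetic_def by (simp add: sq_sum[OF fV])
    then show ?thesis unfolding m cN A_def by (simp add: power2_eq_square algebra_simps)
  qed
  have Pij: "P i j = 2 * N^2 * B" if "i \<in> {1..n}" "j \<in> {1..n}" "i \<noteq> j" for i j
  proof -
    have m: "(\<Sum>t\<in>V. real (lca_depth t i j)) = N * (r / 2 - 1)"
      "(\<Sum>t\<in>V. real (lca_depth t i j)^2) = N * ((4 * real n + 1) / 3 - 3 / 2 * r)"
      using lca_moments[of "{1..n}" i j n] that by (simp_all add: V_def N_def r_def)
    have "P i j = 2*real (card V)*(\<Sum>t\<in>V. real (lca_depth t i j)^2) - 2*(\<Sum>t\<in>V. real (lca_depth t i j))^2"
      unfolding P_def cophenetic_def using that by (simp add: sq_sum[OF fV])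
    then show ?thesis unfolding m cN B_def by (simp add: power2_eq_square algebra_simps)
  qed
  have row: "(\<Sum>j=i..n. P i j) = 2 * N^2 * A + real (n - i) * (2 * N^2 * B)" if "i \<in> {1..n}" for i
  proof -
    have "(\<Sum>j=i..n. P i j) = P i i + (\<Sum>j=Suc i..n. P i j)"
      using that by (simp add: sum.atLeast_Suc_atMost)
    also have "(\<Sum>j=Suc i..n. P i j) = (\<Sum>j=Suc i..n. 2 * N^2 * B)"
      using that by (intro sum.cong refl Pij) auto
    finally show ?thesis using Pii[OF that] by simp
  qed
  have tot: "(\<Sum>t\<in>V. \<Sum>u\<in>V. coph_dist_sq n t u) = (\<Sum>i=1..n. \<Sum>j=i..n. P i j)"
    unfolding coph_dist_sq_def P_def by (rule swap4)
  also have "\<dots> = (\<Sum>i=1..n. 2 * N^2 * A + real (n - i) * (2 * N^2 * B))"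
    by (intro sum.cong refl row) simp
  also have "\<dots> = 2 * N^2 * (real n * A + B * (real n * (real n - 1) / 2))"
  proof -
    have "(\<Sum>i=1..n. 2 * N^2 * A + real (n - i) * (2 * N^2 * B)) = real n * (2 * N^2 * A) + (\<Sum>i=1..n. real (n - i)) * (2 * N^2 * B)"
      by (simp only: sum.distrib sum_distrib_right[symmetric]) simp
    then show ?thesis unfolding gauss_sum by (simp add: algebra_simps)
  qed
  finally have T: "(\<Sum>t\<in>V. \<Sum>u\<in>V. coph_dist_sq n t u) = 2 * N^2 * (real n * A + B * (real n * (real n - 1) / 2))" .
  have E: "expected_D2_uniform n = 2 * (real n * A + B * (real n * (real n - 1) / 2))"
    unfolding expected_eq V_def[symmetric] T cN using Npos by (simp add: field_simps)
  have rdef: "real (dfact (2*n - 2)) / real (dfact (2*n - 3)) = r" by (simp add: r_def rr_def)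
  show ?thesis unfolding E rdef A_def B_def by (simp add: field_simps power2_eq_square power3_eq_cube)
qed


end
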